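(* Let $A$ be an infinite set, $\mathcal{L}\in V(\Omega(A))$, $I,J$ sets, $f:A^{I}\to A^{J}$ uniformly continuous, $\alpha:I\to\mathcal{L}$, $\beta:J\to\mathcal{L}$ with $\beta=\overline{f}^{\mathcal{L}}(\alpha)$. Then $\iota_{\beta,\alpha}\circ\iota_{\beta}=\iota_{\alpha}\circ f^{\beta,\alpha}$ as maps $\mathbf{F}(A,J)/Z_{\beta}\to\langle\alpha''(I)\rangle$.
   Context: For each $a\in A$ let $\hat{a}$ be a constant symbol, and for each $n\geq1$ and each $h:A^{n}\to A$ let $\hat{h}$ be an $n$-ary operation symbol. $\Omega(A)$ is the algebra with universe $A$ interpreting $\hat{a}$ as $a$ and $\hat{h}$ as $h$; $V(\Omega(A))$ is the variety it generates. For $h:X\to Y$, $\Pi(h)$ is the partition of $X$ into nonempty fibers; for a partition $P$ of $Y$, $[h]_{-1}(P)=\{h^{-1}(R):R\in P\}\setminus\{\emptyset\}$. For $i_{1},\dots,i_{n}\in I$, $\mathcal{P}_{i_{1},\dots,i_{n}}$ is the partition of $A^{I}$ with $u,v$ in the same block iff $u(i_{k})=v(i_{k})$ for all $k$; $\mathcal{P}(A,I)$ is the filter of partitions of $A^{I}$ coarser than some $\mathcal{P}_{i_{1},\dots,i_{n}}$, and $\{\emptyset\}\cup\bigcup\mathcal{P}(A,I)$ (all blocks of such partitions, plus $\emptyset$) is a Boolean algebra of subsets of $A^{I}$. $\mathbf{F}(A,I)=\{h\in A^{A^{I}}:\Pi(h)\in\mathcal{P}(A,I)\}$, a subalgebra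 of $\Omega(A)^{A^{I}}$ freely generated in $V(\Omega(A))$ by the projections $\pi_{i}(u)=u(i)$; each element has the form $\hat{r}^{\mathbf{F}(A,I)}(\pi_{i_{1}},\dots,\pi_{i_{n}})$. A map $h:A^{I}\to A^{J}$ is uniformly continuous if $[h]_{-1}(P)\in\mathcal{P}(A,I)$ for all $P\in\mathcal{P}(A,J)$; then each $\pi_{j}\circ h\in\mathbf{F}(A,I)$. For $h=\hat{r}^{\mathbf{F}(A,I)}(\pi_{i_{1}},\dots,\pi_{i_{n}})$, $\overline{h}^{\mathcal{L}}((\ell_{i})_{i\in I})=\hat{r}^{\mathcal{L}}(\ell_{i_{1}},\dots,\ell_{i_{n}})$ (well defined), and for uniformly continuous $f$, $\overline{f}^{\mathcal{L}}(\alpha)=(\overline{\pi_{j}\circ f}^{\mathcal{L}}(\alpha))_{j\in J}$. For $\alpha:I\to\mathcal{L}$, $\phi_{\alpha}:\mathbf{F}(A,I)\to\mathcal{L}$ is the unique homomorphism with $\phi_{\alpha}(\pi_{i})=\alpha(i)$; $Z_{\alpha}$ is the filter on $\{\emptyset\}\cup\bigcup\mathcal{P}(A,I)$ with $\phi_{\alpha}(\ell)=\phi_{\alpha}(m)$ iff $\{u:\ell(u)=m(u)\}\in Z_{\alpha}$; $\mathbf{F}(A,I)/Z_{\alpha}$ is the corresponding quotient, with $[\ell]$ the class of $\ell$; $\langle\alpha''(I)\rangle$ is the subalgebra of $\mathcal{L}$ generated by the image of $\alpha$; and $\iota_{\alpha}:\mathbf{F}(A,I)/Z_{\alpha}\to\langle\alpha''(I)\rangle$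 is the isomorphism $\iota_{\alpha}([\ell])=\phi_{\alpha}(\ell)$. The same notation applies to $\beta$ and $J$. Under the hypotheses, $\langle\beta''(J)\rangle\subseteq\langle\alpha''(I)\rangle$, and $\iota_{\beta,\alpha}:\langle\beta''(J)\rangle\to\langle\alpha''(I)\rangle$ is the inclusion map. The map $f^{\beta,\alpha}:\mathbf{F}(A,J)/Z_{\beta}\to\mathbf{F}(A,I)/Z_{\alpha}$ is defined by $f^{\beta,\alpha}([\ell])=[\ell\circ f]$ (this is well defined). *)

theory Defs
  imports "HOL-Library.FuncSet"
begin

text \<open>The set A is modelled by the type 'a.  An operation symbol for h : A^n -> A (n >= 1)
  is represented by the pair (n, h) with h :: 'a list => 'a, normalised to be undefined
  on lists of length different from n (so each h : A^n -> A has exactly one code).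
  Constant symbols are indexed by the elements of A.\<close>

definition op_sym :: "nat \<Rightarrow> ('a list \<Rightarrow> 'a) \<Rightarrow> bool" where
  "op_sym n h \<longleftrightarrow> n \<ge> 1 \<and> (\<forall>xs. length xs \<noteq> n \<longrightarrow> h xs = undefined)"

record ('a, 'l) osig_alg =
  ocarrier :: "'l set"
  cst :: "'a \<Rightarrow> 'l"
  opr :: "nat \<Rightarrow> ('a list \<Rightarrow> 'a) \<Rightarrow> 'l list \<Rightarrow> 'l"

definition is_oalg :: "('a, 'l) osig_alg \<Rightarrow> bool" where
  "is_oalg L \<longleftrightarrow> (\<forall>a. cst L a \<in> ocarrier L) \<and>
     (\<forall>n h xs. op_sym n h \<and> length xs = n \<and> set xs \<subseteq> ocarrier L \<longrightarrow> opr L n h xs \<in> ocarrier L)"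

definition Omega :: "('a, 'a) osig_alg" where
  "Omega = \<lparr>ocarrier = UNIV, cst = (\<lambda>a. a), opr = (\<lambda>n h xs. h xs)\<rparr>"

datatype 'a oterm = TVar nat | TCst 'a | TOp nat "'a list \<Rightarrow> 'a" "'a oterm list"

fun wf_term :: "'a oterm \<Rightarrow> bool" where
  "wf_term (TVar k) = True"
| "wf_term (TCst a) = True"
| "wf_term (TOp n h ts) = (op_sym n h \<and> length ts = n \<and> (\<forall>t\<in>set ts. wf_term t))"

primrec teval :: "('a, 'l) osig_alg \<Rightarrow> (nat \<Rightarrow> 'l) \<Rightarrow> 'a oterm \<Rightarrow> 'l" where
  "teval L \<rho> (TVar k) = \<rho> k"
| "teval L \<rho> (TCst a) = cst L a"
| "teval L \<rho> (TOp n h ts) = opr L n h (map (teval L \<rho>) ts)"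

text \<open>Membership in the variety V(Omega(A)) generated by Omega(A): an algebra of the
  signature satisfying every identity valid in Omega(A) (Birkhoff: V(K) = Mod(Id(K))).\<close>
definition in_V_Omega :: "('a, 'l) osig_alg \<Rightarrow> bool" where
  "in_V_Omega L \<longleftrightarrow> is_oalg L \<and>
     (\<forall>s t. wf_term s \<and> wf_term t \<and> (\<forall>\<rho>. teval Omega \<rho> s = teval Omega \<rho> t) \<longrightarrow>
        (\<forall>\<rho>. range \<rho> \<subseteq> ocarrier L \<longrightarrow> teval L \<rho> s = teval L \<rho> t))"

definition cube :: "'i set \<Rightarrow> ('i \<Rightarrow> 'a) set" where
  "cube I = I \<rightarrow>\<^sub>E UNIV"

definition is_partition :: "'x set set \<Rightarrow> 'x set \<Rightarrow> bool" where
  "is_partition P X \<longleftrightarrow> \<Union>P = X \<and> {} \<notin> P \<and> (\<forall>B\<in>P. \<forall>C\<in>P. B \<noteq> C \<longrightarrow> B \<inter> C = {})"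

definition fib_part :: "('x \<Rightarrow> 'y) \<Rightarrow> 'x set \<Rightarrow> 'x set set" where
  "fib_part h X = {h -` {y} \<inter> X | y. y \<in> h ` X}"

definition preim_part :: "('x \<Rightarrow> 'y) \<Rightarrow> 'x set \<Rightarrow> 'y set set \<Rightarrow> 'x set set" where
  "preim_part h X P = {h -` R \<inter> X | R. R \<in> P} - {{}}"

definition coord_part :: "'i set \<Rightarrow> 'i list \<Rightarrow> ('i \<Rightarrow> 'a) set set" where
  "coord_part I is = {{v \<in> cube I. \<forall>i\<in>set is. v i = u i} | u. u \<in> cube I}"

definition coarser :: "'x set set \<Rightarrow> 'x set set \<Rightarrow> bool" where
  "coarser P Q \<longleftrightarrow> (\<forall>B\<in>Q. \<exists>C\<in>P. B \<subseteq> C)"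

definition PF :: "'i set \<Rightarrow> ('i \<Rightarrow> 'a) set set set" where
  "PF I = {P. is_partition P (cube I) \<and> (\<exists>is. set is \<subseteq> I \<and> coarser P (coord_part I is))}"

definition BA :: "'i set \<Rightarrow> ('i \<Rightarrow> 'a) set set" where
  "BA I = insert {} (\<Union>(PF I))"

definition FA :: "'i set \<Rightarrow> (('i \<Rightarrow> 'a) \<Rightarrow> 'a) set" where
  "FA I = {h \<in> extensional (cube I). fib_part h (cube I) \<in> PF I}"

definition proj :: "'i set \<Rightarrow> 'i \<Rightarrow> ('i \<Rightarrow> 'a) \<Rightarrow> 'a" where
  "proj I i = restrict (\<lambda>u. u i) (cube I)"

definition unif_cont :: "'i set \<Rightarrow> 'j set \<Rightarrow> (('i \<Rightarrow> 'a) \<Rightarrow> ('j \<Rightarrow> 'a)) \<Rightarrow> bool" where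
  "unif_cont I J f \<longleftrightarrow> f \<in> cube I \<rightarrow> cube J \<and>
     (\<forall>P\<in>PF J. preim_part f (cube I) P \<in> PF I)"

text \<open>Operations of F(A,I) as a subalgebra of Omega(A)^{A^I}.\<close>
definition Fcst :: "'i set \<Rightarrow> 'a \<Rightarrow> ('i \<Rightarrow> 'a) \<Rightarrow> 'a" where
  "Fcst I c = restrict (\<lambda>u. c) (cube I)"

definition Fop :: "'i set \<Rightarrow> nat \<Rightarrow> ('a list \<Rightarrow> 'a) \<Rightarrow> (('i \<Rightarrow> 'a) \<Rightarrow> 'a) list \<Rightarrow> ('i \<Rightarrow> 'a) \<Rightarrow> 'a" where
  "Fop I n h gs = restrict (\<lambda>u. h (map (\<lambda>g. g u) gs)) (cube I)"

definition is_hom_F :: "'i set \<Rightarrow> ('a, 'l) osig_alg \<Rightarrow> ((('i \<Rightarrow> 'a) \<Rightarrow> 'a) \<Rightarrow> 'l) \<Rightarrow> bool" where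
  "is_hom_F I L \<phi> \<longleftrightarrow> \<phi> \<in> FA I \<rightarrow> ocarrier L \<and> (\<forall>c. \<phi> (Fcst I c) = cst L c) \<and>
     (\<forall>n h gs. op_sym n h \<and> length gs = n \<and> set gs \<subseteq> FA I \<longrightarrow>
        \<phi> (Fop I n h gs) = opr L n h (map \<phi> gs))"

definition phi :: "'i set \<Rightarrow> ('a, 'l) osig_alg \<Rightarrow> ('i \<Rightarrow> 'l) \<Rightarrow> (('i \<Rightarrow> 'a) \<Rightarrow> 'a) \<Rightarrow> 'l" where
  "phi I L \<alpha> = (THE \<phi>. \<phi> \<in> FA I \<rightarrow>\<^sub>E ocarrier L \<and> is_hom_F I L \<phi> \<and> (\<forall>i\<in>I. \<phi> (proj I i) = \<alpha> i))"

definition eqset :: "'i set \<Rightarrow> (('i \<Rightarrow> 'a) \<Rightarrow> 'a) \<Rightarrow> (('i \<Rightarrow> 'a) \<Rightarrow> 'a) \<Rightarrow> ('i \<Rightarrow> 'a) set" where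
  "eqset I l m = {u \<in> cube I. l u = m u}"

definition is_filter_on :: "'x set set \<Rightarrow> 'x set \<Rightarrow> 'x set set \<Rightarrow> bool" where
  "is_filter_on B T Z \<longleftrightarrow> Z \<subseteq> B \<and> T \<in> Z \<and> (\<forall>S\<in>Z. \<forall>S'\<in>Z. S \<inter> S' \<in> Z) \<and>
     (\<forall>S\<in>Z. \<forall>S'\<in>B. S \<subseteq> S' \<longrightarrow> S' \<in> Z)"

definition Zf :: "'i set \<Rightarrow> ('a, 'l) osig_alg \<Rightarrow> ('i \<Rightarrow> 'l) \<Rightarrow> ('i \<Rightarrow> 'a) set set" where
  "Zf I L \<alpha> = (THE Z. is_filter_on (BA I) (cube I) Z \<and>
     (\<forall>l\<in>FA I. \<forall>m\<in>FA I. phi I L \<alpha> l = phi I L \<alpha> m \<longleftrightarrow> eqset I l m \<in> Z))"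

definition Zrel :: "'i set \<Rightarrow> ('a, 'l) osig_alg \<Rightarrow> ('i \<Rightarrow> 'l) \<Rightarrow> ((('i \<Rightarrow> 'a) \<Rightarrow> 'a) \<times> (('i \<Rightarrow> 'a) \<Rightarrow> 'a)) set" where
  "Zrel I L \<alpha> = {(l, m). l \<in> FA I \<and> m \<in> FA I \<and> eqset I l m \<in> Zf I L \<alpha>}"

definition Fquot :: "'i set \<Rightarrow> ('a, 'l) osig_alg \<Rightarrow> ('i \<Rightarrow> 'l) \<Rightarrow> (('i \<Rightarrow> 'a) \<Rightarrow> 'a) set set" where
  "Fquot I L \<alpha> = FA I // Zrel I L \<alpha>"

definition cls :: "'i set \<Rightarrow> ('a, 'l) osig_alg \<Rightarrow> ('i \<Rightarrow> 'l) \<Rightarrow> (('i \<Rightarrow> 'a) \<Rightarrow> 'a) \<Rightarrow> (('i \<Rightarrow> 'a) \<Rightarrow> 'a) set" where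
  "cls I L \<alpha> l = Zrel I L \<alpha> `` {l}"

text \<open>iota_alpha([l]) = phi_alpha(l).\<close>
definition iota :: "'i set \<Rightarrow> ('a, 'l) osig_alg \<Rightarrow> ('i \<Rightarrow> 'l) \<Rightarrow> (('i \<Rightarrow> 'a) \<Rightarrow> 'a) set \<Rightarrow> 'l" where
  "iota I L \<alpha> X = the_elem (phi I L \<alpha> ` X)"

definition gen_sub :: "('a, 'l) osig_alg \<Rightarrow> 'l set \<Rightarrow> 'l set" where
  "gen_sub L X = \<Inter>{S. S \<subseteq> ocarrier L \<and> X \<subseteq> S \<and> (\<forall>a. cst L a \<in> S) \<and>
      (\<forall>n h xs. op_sym n h \<and> length xs = n \<and> set xs \<subseteq> S \<longrightarrow> opr L n h xs \<in> S)}"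

definition incl :: "('a, 'l) osig_alg \<Rightarrow> 'l set \<Rightarrow> 'l \<Rightarrow> 'l" where
  "incl L Y = restrict id (gen_sub L Y)"

text \<open>f^{beta,alpha}([l]) = [l o f].\<close>
definition fquot_map :: "'i set \<Rightarrow> 'j set \<Rightarrow> ('a, 'l) osig_alg \<Rightarrow> ('i \<Rightarrow> 'l) \<Rightarrow> ('j \<Rightarrow> 'l) \<Rightarrow>
    (('i \<Rightarrow> 'a) \<Rightarrow> ('j \<Rightarrow> 'a)) \<Rightarrow> (('j \<Rightarrow> 'a) \<Rightarrow> 'a) set \<Rightarrow> (('i \<Rightarrow> 'a) \<Rightarrow> 'a) set" where
  "fquot_map I J L \<alpha> \<beta> f X = the_elem ((\<lambda>l. cls I L \<alpha> (restrict (l \<circ> f) (cube I))) ` X)"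

text \<open>For h = r^F(pi_{i1},...,pi_{in}): overline{h}^L(alpha) = r^L(alpha i1, ..., alpha in);
  a constant element c^F is sent to c^L (covers the case I = {}).\<close>
definition ovl :: "'i set \<Rightarrow> ('a, 'l) osig_alg \<Rightarrow> (('i \<Rightarrow> 'a) \<Rightarrow> 'a) \<Rightarrow> ('i \<Rightarrow> 'l) \<Rightarrow> 'l" where
  "ovl I L h \<alpha> = (SOME y. (\<exists>c. h = Fcst I c \<and> y = cst L c) \<or>
     (\<exists>n r is. op_sym n r \<and> length is = n \<and> set is \<subseteq> I \<and>
        h = Fop I n r (map (proj I) is) \<and> y = opr L n r (map \<alpha> is)))"

definition ovlF :: "'i set \<Rightarrow> 'j set \<Rightarrow> ('a, 'l) osig_alg \<Rightarrow> (('i \<Rightarrow> 'a) \<Rightarrow> ('j \<Rightarrow> 'a)) \<Rightarrow>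
    ('i \<Rightarrow> 'l) \<Rightarrow> 'j \<Rightarrow> 'l" where
  "ovlF I J L f \<alpha> = (\<lambda>j\<in>J. ovl I L (restrict (\<lambda>u. f u j) (cube I)) \<alpha>)"

end

theory Submission
  imports Defs
begin


datatype ('a,'i) mt = MV 'i | MC 'a | MO nat "'a list \<Rightarrow> 'a" "('a,'i) mt list"

fun mwf :: "('a,'i) mt \<Rightarrow> bool" where
  "mwf (MV i) = True"
| "mwf (MC c) = True"
| "mwf (MO n h ts) = (op_sym n h \<and> length ts = n \<and> (\<forall>t\<in>set ts. mwf t))"

fun mvl :: "('a,'i) mt \<Rightarrow> 'i list" where
  "mvl (MV i) = [i]"
| "mvl (MC c) = []"
| "mvl (MO n h ts) = concat (map mvl ts)"

primrec leval :: "('a, 'l) osig_alg \<Rightarrow> ('i \<Rightarrow> 'l) \<Rightarrow> ('a,'i) mt \<Rightarrow> 'l" where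
  "leval L \<rho> (MV i) = \<rho> i"
| "leval L \<rho> (MC c) = cst L c"
| "leval L \<rho> (MO n h ts) = opr L n h (map (leval L \<rho>) ts)"

primrec Fsub :: "'i set \<Rightarrow> ('j \<Rightarrow> ('i \<Rightarrow> 'a) \<Rightarrow> 'a) \<Rightarrow> ('a,'j) mt \<Rightarrow> ('i \<Rightarrow> 'a) \<Rightarrow> 'a" where
  "Fsub I \<sigma> (MV j) = \<sigma> j"
| "Fsub I \<sigma> (MC c) = Fcst I c"
| "Fsub I \<sigma> (MO n h ts) = Fop I n h (map (Fsub I \<sigma>) ts)"

primrec rn :: "('i \<Rightarrow> nat) \<Rightarrow> ('a,'i) mt \<Rightarrow> 'a oterm" where
  "rn g (MV i) = TVar (g i)"
| "rn g (MC c) = TCst c"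
| "rn g (MO n h ts) = TOp n h (map (rn g) ts)"

lemma teval_rn: "teval L \<rho> (rn g t) = leval L (\<rho> \<circ> g) t"
  by (induction t) (auto cong: map_cong)

lemma wf_rn: "wf_term (rn g t) = mwf t"
  by (induction t) auto

lemma leval_cong: "(\<forall>i\<in>set (mvl t). \<rho> i = \<rho>' i) \<Longrightarrow> leval L \<rho> t = leval L \<rho>' t"
  by (induction t) (auto cong: map_cong)

lemma leval_carrier: "is_oalg L \<Longrightarrow> mwf t \<Longrightarrow> (\<forall>i\<in>set (mvl t). \<rho> i \<in> ocarrier L) \<Longrightarrow> leval L \<rho> t \<in> ocarrier L"
proof (induction t)
  case (MO n h ts)
  have "set (map (leval L \<rho>) ts) \<subseteq> ocarrier L" using MO by auto
  moreover have "op_sym n h" "length (map (leval L \<rho>) ts) = n" using MO(3) by auto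
  ultimately show ?case using MO(2) unfolding is_oalg_def leval.simps by blast
qed (auto simp: is_oalg_def)

lemma leval_sub: "(\<forall>a. cst L a \<in> S) \<Longrightarrow> (\<forall>n h xs. op_sym n h \<and> length xs = n \<and> set xs \<subseteq> S \<longrightarrow> opr L n h xs \<in> S)
   \<Longrightarrow> mwf t \<Longrightarrow> (\<forall>i\<in>set (mvl t). \<rho> i \<in> S) \<Longrightarrow> leval L \<rho> t \<in> S"
proof (induction t)
  case (MO n h ts)
  have "set (map (leval L \<rho>) ts) \<subseteq> S" using MO by auto
  moreover have "op_sym n h" "length (map (leval L \<rho>) ts) = n" using MO(4) by auto
  ultimately show ?case using MO(3) unfolding leval.simps by blast
qed auto

lemma Fsub_pt: "u \<in> cube I \<Longrightarrow> Fsub I \<sigma> t u = leval Omega (\<lambda>j. \<sigma> j u) t"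
  by (induction t) (auto simp: Fcst_def Fop_def Omega_def cong: map_cong)

lemma fib_part_partition: "is_partition (fib_part h X) X"
  unfolding is_partition_def fib_part_def by auto

lemma coord_part_partition: "is_partition (coord_part I is) (cube I)"
  unfolding is_partition_def coord_part_def
  apply (intro conjI)
    apply blast
   apply blast
  apply clarify
  apply (smt (verit, best) disjoint_iff_not_equal mem_Collect_eq subsetI subset_antisym)
  done

definition dep :: "'i set \<Rightarrow> (('i \<Rightarrow> 'a) \<Rightarrow> 'a) \<Rightarrow> 'i list \<Rightarrow> bool" where
  "dep I h is \<longleftrightarrow> (\<forall>u\<in>cube I. \<forall>v\<in>cube I. (\<forall>i\<in>set is. u i = v i) \<longrightarrow> h u = h v)"

lemma charFA: fixes h :: "('i \<Rightarrow> 'a) \<Rightarrow> 'a" shows "h \<in> FA I \<longleftrightarrow> h \<in> extensional (cube I) \<and> (\<exists>ks. set ks \<subseteq> I \<and> dep I h ks)"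
proof
  assume h: "h \<in> FA I"
  then obtain ks where ks: "set ks \<subseteq> I" "coarser (fib_part h (cube I)) (coord_part I ks)"
    unfolding FA_def PF_def by auto
  have "dep I h ks" unfolding dep_def
  proof (intro ballI impI)
    fix u v :: "'i \<Rightarrow> 'a" assume uv: "u \<in> cube I" "v \<in> cube I" "\<forall>i\<in>set ks. u i = v i"
    let ?B = "{w \<in> (cube I :: ('i \<Rightarrow> 'a) set). \<forall>i\<in>set ks. w i = u i}"
    have "?B \<in> coord_part I ks" using uv unfolding coord_part_def by blast
    then obtain C where "C \<in> fib_part h (cube I)" "?B \<subseteq> C" using ks(2) unfolding coarser_def by blast
    then obtain y where "C = h -` {y} \<inter> cube I" unfolding fib_part_def by blast
    moreover have "u \<in> ?B" "v \<in> ?B" using uv by auto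
    ultimately show "h u = h v" using \<open>?B \<subseteq> C\<close> by blast
  qed
  then show "h \<in> extensional (cube I) \<and> (\<exists>ks. set ks \<subseteq> I \<and> dep I h ks)" using h ks unfolding FA_def by blast
next
  assume "h \<in> extensional (cube I) \<and> (\<exists>ks. set ks \<subseteq> I \<and> dep I h ks)"
  then obtain ks where h: "h \<in> extensional (cube I)" "set ks \<subseteq> I" "dep I h ks" by blast
  have "coarser (fib_part h (cube I)) (coord_part I ks)" unfolding coarser_def
  proof
    fix B :: "('i \<Rightarrow> 'a) set" assume "B \<in> coord_part I ks"
    then obtain u :: "'i \<Rightarrow> 'a" where u: "u \<in> cube I" "B = {v \<in> cube I. \<forall>i\<in>set ks. v i = u i}" unfolding coord_part_def by blast
    have "h -` {h u} \<inter> cube I \<in> fib_part h (cube I)" using u unfolding fib_part_def by blast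
    moreover have "B \<subseteq> h -` {h u} \<inter> cube I"
    proof
      fix v assume v: "v \<in> B"
      then have "v \<in> cube I" "\<forall>i\<in>set ks. v i = u i" using u by auto
      then have "h v = h u" using h(3) u(1) unfolding dep_def by blast
      then show "v \<in> h -` {h u} \<inter> cube I" using \<open>v \<in> cube I\<close> by simp
    qed
    ultimately show "\<exists>C\<in>fib_part h (cube I). B \<subseteq> C" by blast
  qed
  then have "fib_part h (cube I) \<in> PF I" unfolding PF_def using fib_part_partition h(2) by blast
  then show "h \<in> FA I" unfolding FA_def using h(1) by simp
qed

lemma cube_restrict: "restrict g I \<in> cube I"
  unfolding cube_def by auto

lemma Fcst_FA: "Fcst I c \<in> FA I"
  unfolding charFA Fcst_def dep_def by (intro conjI exI[of _ "[]"]) auto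

lemma proj_FA: "i \<in> I \<Longrightarrow> proj I i \<in> FA I"
  unfolding charFA proj_def dep_def by (intro conjI exI[of _ "[i]"]) auto

lemma Fop_FA: fixes gs :: "(('i \<Rightarrow> 'a) \<Rightarrow> 'a) list" and I :: "'i set" assumes "set gs \<subseteq> FA I" shows "Fop I n h gs \<in> FA I"
proof -
  have "\<forall>g\<in>set gs. \<exists>ks. set ks \<subseteq> I \<and> dep I g ks" using assms charFA by blast
  then obtain F where F: "\<forall>g\<in>set gs. set (F g) \<subseteq> I \<and> dep I g (F g)" by metis
  let ?ks = "concat (map F gs)"
  have "set ?ks \<subseteq> I" using F by auto
  moreover have "dep I (Fop I n h gs) ?ks" unfolding dep_def Fop_def
  proof (intro ballI impI)
    fix u v :: "'i \<Rightarrow> 'a" assume uv: "u \<in> cube I" "v \<in> cube I" "\<forall>i\<in>set ?ks. u i = v i"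
    have mm: "map (\<lambda>g. g u) gs = map (\<lambda>g. g v) gs"
    proof (rule map_cong[OF refl])
      fix g assume g: "g \<in> set gs"
      have "\<forall>i\<in>set (F g). u i = v i" using uv(3) g by auto
      then show "g u = g v" using F g uv unfolding dep_def by blast
    qed
    then show "restrict (\<lambda>u. h (map (\<lambda>g. g u) gs)) (cube I) u = restrict (\<lambda>u. h (map (\<lambda>g. g u) gs)) (cube I) v"
      using uv by (simp add: mm)
  qed
  moreover have "Fop I n h gs \<in> extensional (cube I)" unfolding Fop_def by simp
  ultimately show ?thesis unfolding charFA by blast
qed

lemma Fsub_FA: "(\<forall>j\<in>set (mvl t). \<sigma> j \<in> FA I) \<Longrightarrow> Fsub I \<sigma> t \<in> FA I"
proof (induction t)
  case (MO n h ts)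
  then show ?case by (auto intro!: Fop_FA)
qed (auto simp: Fcst_FA)

lemma Fsub_hom: "is_hom_F I L \<phi> \<Longrightarrow> mwf t \<Longrightarrow> (\<forall>j\<in>set (mvl t). \<sigma> j \<in> FA I) \<Longrightarrow>
   \<phi> (Fsub I \<sigma> t) = leval L (\<phi> \<circ> \<sigma>) t"
proof (induction t)
  case (MO n h ts)
  have fa: "set (map (Fsub I \<sigma>) ts) \<subseteq> FA I" using MO(4) by (auto intro!: Fsub_FA)
  have H: "\<And>gs. op_sym n h \<Longrightarrow> length gs = n \<Longrightarrow> set gs \<subseteq> FA I \<Longrightarrow> \<phi> (Fop I n h gs) = opr L n h (map \<phi> gs)"
    using MO(2) unfolding is_hom_F_def by blast
  have "\<phi> (Fsub I \<sigma> (MO n h ts)) = opr L n h (map \<phi> (map (Fsub I \<sigma>) ts))"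
    using H[OF _ _ fa] MO(3) by simp
  also have "map \<phi> (map (Fsub I \<sigma>) ts) = map (leval L (\<phi> \<circ> \<sigma>)) ts"
    using MO by (auto simp: comp_def)
  finally show ?case by (simp add: comp_def)
qed (auto simp: is_hom_F_def)

definition idx :: "'i list \<Rightarrow> 'i \<Rightarrow> nat" where
  "idx ks i = (SOME k. k < length ks \<and> ks ! k = i)"

lemma idx: "i \<in> set ks \<Longrightarrow> idx ks i < length ks \<and> ks ! idx ks i = i"
  unfolding idx_def by (rule someI_ex) (metis in_set_conv_nth)

lemma proj_app: "u \<in> cube I \<Longrightarrow> proj I i u = u i"
  by (simp add: proj_def)

lemma FA_rep: fixes h :: "('i \<Rightarrow> 'a) \<Rightarrow> 'a"
  assumes "h \<in> FA I"
  shows "(\<exists>c. h = Fcst I c) \<or> (\<exists>n r ks. op_sym n r \<and> length ks = n \<and> set ks \<subseteq> I \<and> h = Fop I n r (map (proj I) ks))"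
proof -
  obtain ks where h: "h \<in> extensional (cube I)" "set ks \<subseteq> I" "dep I h ks" using assms charFA by blast
  show ?thesis
  proof (cases "ks = []")
    case True
    define u0 :: "'i \<Rightarrow> 'a" where "u0 = restrict (\<lambda>_. undefined) I"
    have u0: "u0 \<in> cube I" unfolding u0_def by (rule cube_restrict)
    have "h = Fcst I (h u0)"
    proof (rule ext)
      fix u show "h u = Fcst I (h u0) u"
      proof (cases "u \<in> cube I")
        case True
        have "\<forall>i\<in>set ks. u i = u0 i" using \<open>ks = []\<close> by simp
        then have "h u = h u0" using h(3) True u0 unfolding dep_def by blast
        then show ?thesis using True by (simp add: Fcst_def)
      next
        case False
        have "h u = undefined" using extensional_arb[OF h(1) False] .
        then show ?thesis using False by (simp add: Fcst_def)
      qed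
    qed
    then show ?thesis by (rule disjI1[OF exI])
  next
    case False
    define n where "n = length ks"
    define r where "r = (\<lambda>xs::'a list. if length xs = n then h (restrict (\<lambda>i. xs ! idx ks i) I) else undefined)"
    have "1 \<le> n" unfolding n_def using False by (simp add: Suc_le_eq)
    then have op: "op_sym n r" unfolding op_sym_def r_def by simp
    have "h = Fop I n r (map (proj I) ks)"
    proof (rule ext)
      fix u show "h u = Fop I n r (map (proj I) ks) u"
      proof (cases "u \<in> cube I")
        case True
        define w where "w = restrict (\<lambda>i. map u ks ! idx ks i) I"
        have w: "w \<in> cube I" unfolding w_def by (rule cube_restrict)
        have agree: "\<forall>i\<in>set ks. w i = u i"
        proof
          fix i assume i: "i \<in> set ks"
          have "idx ks i < length ks" "ks ! idx ks i = i" using idx[OF i] by auto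
          moreover have "i \<in> I" using h(2) i by blast
          ultimately show "w i = u i" by (simp add: w_def)
        qed
        have mm: "map (\<lambda>g. g u) (map (proj I) ks) = map u ks" using True by (simp add: proj_app)
        have "Fop I n r (map (proj I) ks) u = r (map (\<lambda>g. g u) (map (proj I) ks))"
          using True by (simp add: Fop_def del: map_map)
        also have "\<dots> = r (map u ks)" unfolding mm ..
        also have "r (map u ks) = h w" unfolding r_def w_def n_def by simp
        also have "h w = h u" using h(3) w True agree unfolding dep_def by blast
        finally show ?thesis by simp
      next
        case False
        have "h u = undefined" using extensional_arb[OF h(1) False] .
        then show ?thesis using False by (simp add: Fop_def)
      qed
    qed
    then show ?thesis using op h(2) n_def by (intro disjI2 exI[of _ n] exI[of _ r] exI[of _ ks]) simp
  qed
qed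

lemma id_transfer:
  fixes t1 t2 :: "('a,'i) mt" and L :: "('a,'l) osig_alg"
  assumes V: "in_V_Omega L" and w: "mwf t1" "mwf t2"
    and vars: "set (mvl t1) \<subseteq> I" "set (mvl t2) \<subseteq> I"
    and eq: "\<forall>u\<in>cube I. leval Omega u t1 = leval Omega u t2"
    and al: "\<alpha> \<in> I \<rightarrow> ocarrier L"
  shows "leval L \<alpha> t1 = leval L \<alpha> t2"
proof -
  define ks where "ks = mvl t1 @ mvl t2"
  define g where "g = idx ks"
  have om: "teval Omega \<rho> (rn g t1) = teval Omega \<rho> (rn g t2)" for \<rho> :: "nat \<Rightarrow> 'a"
  proof -
    define u where "u = restrict (\<rho> \<circ> g) I"
    have u: "u \<in> cube I" unfolding u_def by (rule cube_restrict)
    have "leval Omega (\<rho> \<circ> g) t1 = leval Omega u t1"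
      by (rule leval_cong) (use vars in \<open>auto simp: u_def\<close>)
    moreover have "leval Omega (\<rho> \<circ> g) t2 = leval Omega u t2"
      by (rule leval_cong) (use vars in \<open>auto simp: u_def\<close>)
    ultimately show ?thesis using eq u by (simp add: teval_rn)
  qed
  define \<rho>' where "\<rho>' = (\<lambda>k. if k < length ks then \<alpha> (ks ! k) else cst L undefined)"
  have "is_oalg L" using V unfolding in_V_Omega_def by blast
  have "set ks \<subseteq> I" using vars ks_def by auto
  have rng: "range \<rho>' \<subseteq> ocarrier L"
  proof (rule subsetI)
    fix x assume "x \<in> range \<rho>'"
    then obtain k where k: "x = \<rho>' k" by blast
    show "x \<in> ocarrier L"
    proof (cases "k < length ks")
      case True
      then have "ks ! k \<in> I" using \<open>set ks \<subseteq> I\<close> nth_mem by blast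
      then show ?thesis using al True k unfolding \<rho>'_def by auto
    next
      case False then show ?thesis using k \<open>is_oalg L\<close> unfolding \<rho>'_def is_oalg_def by simp
    qed
  qed
  have gk: "(\<rho>' \<circ> g) i = \<alpha> i" if "i \<in> set ks" for i
    using idx[OF that] by (simp add: \<rho>'_def g_def)
  have "teval L \<rho>' (rn g t1) = teval L \<rho>' (rn g t2)"
    using V w om rng unfolding in_V_Omega_def by (simp add: wf_rn)
  moreover have "leval L (\<rho>' \<circ> g) t1 = leval L \<alpha> t1"
    by (rule leval_cong) (use gk in \<open>auto simp: ks_def\<close>)
  moreover have "leval L (\<rho>' \<circ> g) t2 = leval L \<alpha> t2"
    by (rule leval_cong) (use gk in \<open>auto simp: ks_def\<close>)
  ultimately show ?thesis by (simp add: teval_rn)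
qed



definition rep :: "'i set \<Rightarrow> ('a,'i) mt \<Rightarrow> (('i \<Rightarrow> 'a) \<Rightarrow> 'a) \<Rightarrow> bool" where
  "rep I t h \<longleftrightarrow> mwf t \<and> set (mvl t) \<subseteq> I \<and> Fsub I (proj I) t = h"

lemma rep_ex: assumes "h \<in> FA I" shows "\<exists>t. rep I t h"
  using FA_rep[OF assms]
proof
  assume "\<exists>c. h = Fcst I c"
  then obtain c where "h = Fcst I c" by blast
  then have "rep I (MC c) h" unfolding rep_def by simp
  then show ?thesis by (rule exI)
next
  assume "\<exists>n r ks. op_sym n r \<and> length ks = n \<and> set ks \<subseteq> I \<and> h = Fop I n r (map (proj I) ks)"
  then obtain n r ks where nr: "op_sym n r" "length ks = n" "set ks \<subseteq> I" "h = Fop I n r (map (proj I) ks)" by blast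
  have "map (Fsub I (proj I)) (map MV ks) = map (proj I) ks" by simp
  then have "Fsub I (proj I) (MO n r (map MV ks)) = h" unfolding nr(4) Fsub.simps by (rule arg_cong)
  moreover have "mwf (MO n r (map MV ks))" using nr(1,2) by simp
  moreover have "set (mvl (MO n r (map MV ks))) = set ks" by auto
  ultimately have "rep I (MO n r (map MV ks)) h" unfolding rep_def using nr(3) by simp
  then show ?thesis by (rule exI)
qed

lemma rep_FA: fixes t :: "('a,'i) mt" assumes "rep I t h" shows "h \<in> FA I"
proof -
  have "set (mvl t) \<subseteq> I" using assms unfolding rep_def by (elim conjE)
  then have "\<forall>j\<in>set (mvl t). (proj I j :: ('i \<Rightarrow> 'a) \<Rightarrow> 'a) \<in> FA I"
    by (intro ballI proj_FA) (rule subsetD)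
  then have "Fsub I (proj I) t \<in> FA I" by (rule Fsub_FA)
  then show ?thesis using assms unfolding rep_def by simp
qed

lemma Fsub_proj_pt: assumes "u \<in> cube I" "set (mvl t) \<subseteq> I" shows "Fsub I (proj I) t u = leval Omega u t"
proof -
  have "Fsub I (proj I) t u = leval Omega (\<lambda>j. proj I j u) t" using assms(1) by (rule Fsub_pt)
  also have "\<dots> = leval Omega u t" by (rule leval_cong) (simp add: proj_app assms(1))
  finally show ?thesis .
qed

lemma rep_unique: fixes t1 t2 :: "('a,'i) mt" and L :: "('a,'l) osig_alg" assumes "in_V_Omega L" "\<alpha> \<in> I \<rightarrow> ocarrier L" "rep I t1 h" "rep I t2 h"
  shows "leval L \<alpha> t1 = leval L \<alpha> t2"
proof (rule id_transfer[where I=I])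
  have r1: "mwf t1" "set (mvl t1) \<subseteq> I" "Fsub I (proj I) t1 = h" using assms(3) unfolding rep_def by auto
  have r2: "mwf t2" "set (mvl t2) \<subseteq> I" "Fsub I (proj I) t2 = h" using assms(4) unfolding rep_def by auto
  show "\<forall>u\<in>cube I. leval Omega u t1 = leval Omega u t2"
  proof
    fix u :: "'i \<Rightarrow> 'a" assume u: "u \<in> cube I"
    have "leval Omega u t1 = Fsub I (proj I) t1 u" using Fsub_proj_pt[OF u r1(2)] by simp
    also have "\<dots> = Fsub I (proj I) t2 u" using r1(3) r2(3) by simp
    also have "\<dots> = leval Omega u t2" using Fsub_proj_pt[OF u r2(2)] by simp
    finally show "leval Omega u t1 = leval Omega u t2" .
  qed
qed (use assms in \<open>auto simp: rep_def\<close>)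

definition phi0 :: "'i set \<Rightarrow> ('a,'l) osig_alg \<Rightarrow> ('i \<Rightarrow> 'l) \<Rightarrow> (('i \<Rightarrow> 'a) \<Rightarrow> 'a) \<Rightarrow> 'l" where
  "phi0 I L \<alpha> h = (if h \<in> FA I then leval L \<alpha> (SOME t. rep I t h) else undefined)"

lemma phi0_rep: fixes t :: "('a,'i) mt" and L :: "('a,'l) osig_alg"
  assumes V: "in_V_Omega L" and al: "\<alpha> \<in> I \<rightarrow> ocarrier L" and r: "rep I t h"
  shows "phi0 I L \<alpha> h = leval L \<alpha> t"
proof -
  have h: "h \<in> FA I" using r by (rule rep_FA)
  have "rep I (SOME t. rep I t h) h" using r by (rule someI)
  then have "leval L \<alpha> (SOME t. rep I t h) = leval L \<alpha> t" by (rule rep_unique[OF V al _ r])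
  then show ?thesis using h unfolding phi0_def by simp
qed

lemma rep_leval_carrier: fixes t :: "('a,'i) mt" and L :: "('a,'l) osig_alg"
  assumes V: "in_V_Omega L" and al: "\<alpha> \<in> I \<rightarrow> ocarrier L" and r: "rep I t h"
  shows "leval L \<alpha> t \<in> ocarrier L"
proof -
  have o: "is_oalg L" using V unfolding in_V_Omega_def by simp
  have r1: "mwf t" "set (mvl t) \<subseteq> I" using r unfolding rep_def by auto
  have "\<forall>i\<in>set (mvl t). \<alpha> i \<in> ocarrier L" using r1(2) al by (auto simp: Pi_def)
  then show ?thesis using o r1(1) leval_carrier by blast
qed

lemma phi0_Pi: fixes L :: "('a,'l) osig_alg" and I :: "'i set"
  assumes V: "in_V_Omega L" and al: "\<alpha> \<in> I \<rightarrow> ocarrier L"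
  shows "phi0 I L \<alpha> \<in> FA I \<rightarrow>\<^sub>E ocarrier L"
proof (rule PiE_I)
  fix h :: "('i \<Rightarrow> 'a) \<Rightarrow> 'a" assume h: "h \<in> FA I"
  obtain t :: "('a,'i) mt" where r: "rep I t h" using rep_ex[OF h] by blast
  show "phi0 I L \<alpha> h \<in> ocarrier L" using phi0_rep[OF V al r] rep_leval_carrier[OF V al r] by simp
next
  fix h :: "('i \<Rightarrow> 'a) \<Rightarrow> 'a" assume "h \<notin> FA I"
  then show "phi0 I L \<alpha> h = undefined" unfolding phi0_def by simp
qed

lemma phi0_hom: fixes L :: "('a,'l) osig_alg" and I :: "'i set"
  assumes V: "in_V_Omega L" and al: "\<alpha> \<in> I \<rightarrow> ocarrier L"
  shows "is_hom_F I L (phi0 I L \<alpha>)"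
  unfolding is_hom_F_def
proof (intro conjI allI impI)
  show "phi0 I L \<alpha> \<in> FA I \<rightarrow> ocarrier L" using phi0_Pi[OF V al] by (simp add: PiE_def)
next
  fix c
  have "rep I (MC c :: ('a,'i) mt) (Fcst I c)" unfolding rep_def by simp
  from phi0_rep[OF V al this] show "phi0 I L \<alpha> (Fcst I c) = cst L c" by simp
next
  fix n and h :: "'a list \<Rightarrow> 'a" and gs :: "(('i \<Rightarrow> 'a) \<Rightarrow> 'a) list" assume a: "op_sym n h \<and> length gs = n \<and> set gs \<subseteq> FA I"
  define ts :: "('a,'i) mt list" where "ts = map (\<lambda>g. SOME t. rep I t g) gs"
  have R: "rep I (SOME t :: ('a,'i) mt. rep I t g) g" if "g \<in> set gs" for g
  proof -
    have "g \<in> FA I" using a that by blast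
    from rep_ex[OF this] show ?thesis by (rule someI_ex)
  qed
  have m1: "mwf (MO n h ts)" using a R unfolding ts_def rep_def by auto
  have m2: "set (mvl (MO n h ts)) \<subseteq> I" using R unfolding ts_def rep_def by auto
  have "map (Fsub I (proj I)) ts = gs" unfolding ts_def map_map
    by (rule map_idI) (use R in \<open>simp add: rep_def\<close>)
  then have m3: "Fsub I (proj I) (MO n h ts) = Fop I n h gs" by simp
  have rr: "rep I (MO n h ts) (Fop I n h gs)" using m1 m2 m3 unfolding rep_def by simp
  have "map (leval L \<alpha>) ts = map (phi0 I L \<alpha>) gs" unfolding ts_def map_map
    by (rule map_cong[OF refl]) (simp add: phi0_rep[OF V al R])
  then show "phi0 I L \<alpha> (Fop I n h gs) = opr L n h (map (phi0 I L \<alpha>) gs)"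
    using phi0_rep[OF V al rr] by simp
qed

lemma phi0_proj: fixes L :: "('a,'l) osig_alg" and I :: "'i set"
  assumes V: "in_V_Omega L" and al: "\<alpha> \<in> I \<rightarrow> ocarrier L" and i: "i \<in> I"
  shows "phi0 I L \<alpha> (proj I i) = \<alpha> i"
proof -
  have "rep I (MV i :: ('a,'i) mt) (proj I i)" unfolding rep_def using i by simp
  from phi0_rep[OF V al this] show ?thesis by simp
qed

lemma phi0_unique: fixes L :: "('a,'l) osig_alg" and I :: "'i set"
  assumes V: "in_V_Omega L" and al: "\<alpha> \<in> I \<rightarrow> ocarrier L"
    and P: "\<phi> \<in> FA I \<rightarrow>\<^sub>E ocarrier L \<and> is_hom_F I L \<phi> \<and> (\<forall>i\<in>I. \<phi> (proj I i) = \<alpha> i)"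
  shows "\<phi> = phi0 I L \<alpha>"
proof (rule ext)
  fix h :: "('i \<Rightarrow> 'a) \<Rightarrow> 'a"
  show "\<phi> h = phi0 I L \<alpha> h"
  proof (cases "h \<in> FA I")
    case True
    obtain t :: "('a,'i) mt" where r: "rep I t h" using rep_ex[OF True] by blast
    have r1: "mwf t" "set (mvl t) \<subseteq> I" "Fsub I (proj I) t = h" using r unfolding rep_def by auto
    have pf: "\<forall>j\<in>set (mvl t). (proj I j :: ('i \<Rightarrow> 'a) \<Rightarrow> 'a) \<in> FA I"
      using r1(2) by (intro ballI proj_FA) (rule subsetD)
    have "\<phi> h = \<phi> (Fsub I (proj I) t)" using r1(3) by simp
    also have "\<dots> = leval L (\<phi> \<circ> proj I) t" using P r1(1) pf Fsub_hom by blast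
    also have "\<dots> = leval L \<alpha> t" by (rule leval_cong) (use P r1(2) in auto)
    also have "\<dots> = phi0 I L \<alpha> h" using phi0_rep[OF V al r] by simp
    finally show ?thesis .
  next
    case False
    have "\<phi> \<in> extensional (FA I)" using P by (simp add: PiE_def)
    then have "\<phi> h = undefined" using False by (rule extensional_arb)
    then show ?thesis using False unfolding phi0_def by simp
  qed
qed

lemma phi_eq: fixes L :: "('a,'l) osig_alg" and I :: "'i set"
  assumes V: "in_V_Omega L" and al: "\<alpha> \<in> I \<rightarrow> ocarrier L"
  shows "phi I L \<alpha> = phi0 I L \<alpha>"
  unfolding phi_def
proof (rule the_equality)
  show "phi0 I L \<alpha> \<in> FA I \<rightarrow>\<^sub>E ocarrier L \<and> is_hom_F I L (phi0 I L \<alpha>) \<and> (\<forall>i\<in>I. phi0 I L \<alpha> (proj I i) = \<alpha> i)"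
    using phi0_Pi[OF V al] phi0_hom[OF V al] phi0_proj[OF V al] by blast
next
  fix \<phi> assume "\<phi> \<in> FA I \<rightarrow>\<^sub>E ocarrier L \<and> is_hom_F I L \<phi> \<and> (\<forall>i\<in>I. \<phi> (proj I i) = \<alpha> i)"
  then show "\<phi> = phi0 I L \<alpha>" using V al phi0_unique by blast
qed

lemma phi_rep: fixes t :: "('a,'i) mt" and L :: "('a,'l) osig_alg"
  assumes V: "in_V_Omega L" and al: "\<alpha> \<in> I \<rightarrow> ocarrier L" and r: "rep I t h"
  shows "phi I L \<alpha> h = leval L \<alpha> t"
  using phi0_rep[OF V al r] phi_eq[OF V al] by simp

lemma phi_hom: fixes L :: "('a,'l) osig_alg" and I :: "'i set"
  assumes V: "in_V_Omega L" and al: "\<alpha> \<in> I \<rightarrow> ocarrier L"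
  shows "is_hom_F I L (phi I L \<alpha>)"
  using phi0_hom[OF V al] phi_eq[OF V al] by simp

definition T4 :: "'a list \<Rightarrow> 'a" where
  "T4 xs = (if length xs = 4 then (if xs!0 = xs!1 then xs!2 else xs!3) else undefined)"

lemma op_T4: "op_sym 4 T4"
  unfolding op_sym_def T4_def by simp

lemma FA_ext: "h \<in> FA I \<Longrightarrow> h \<in> extensional (cube I)"
  by (simp add: FA_def)

lemma hom4: fixes I :: "'i set" and L :: "('a,'l) osig_alg"
  assumes H: "is_hom_F I L \<phi>" and f: "l \<in> FA I" "m \<in> FA I" "p \<in> FA I" "q \<in> FA I"
  shows "\<phi> (Fop I 4 T4 [l,m,p,q]) = opr L 4 T4 [\<phi> l, \<phi> m, \<phi> p, \<phi> q]"
proof -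
  have "\<forall>n h gs. op_sym n h \<and> length gs = n \<and> set gs \<subseteq> FA I \<longrightarrow> \<phi> (Fop I n h gs) = opr L n h (map \<phi> gs)"
    using H unfolding is_hom_F_def by (elim conjE)
  note HH = this
  have "\<phi> (Fop I 4 T4 [l,m,p,q]) = opr L 4 T4 (map \<phi> [l,m,p,q])"
    by (rule HH[rule_format, of 4 T4 "[l,m,p,q]"]) (use op_T4 f in auto)
  then show ?thesis by simp
qed

lemma Fop4: "Fop I 4 T4 [l,m,p,q] = restrict (\<lambda>u. if l u = m u then p u else q u) (cube I)"
  by (simp add: Fop_def T4_def cong: if_cong)

lemma ext_eq: fixes f g :: "('i \<Rightarrow> 'a) \<Rightarrow> 'a"
  assumes "f \<in> extensional (cube I)" "g \<in> extensional (cube I)" "\<And>u. u \<in> cube I \<Longrightarrow> f u = g u"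
  shows "f = g"
  using assms by (rule extensionalityI)

lemma Aprime: fixes I :: "'i set" and L :: "('a,'l) osig_alg" and l m l' m' :: "('i \<Rightarrow> 'a) \<Rightarrow> 'a"
  assumes H: "is_hom_F I L \<phi>" and f: "l \<in> FA I" "m \<in> FA I" "l' \<in> FA I" "m' \<in> FA I"
    and e: "\<phi> l = \<phi> m" and sub: "eqset I l m \<subseteq> eqset I l' m'"
  shows "\<phi> l' = \<phi> m'"
proof -
  have e1: "Fop I 4 T4 [l,m,l',m'] = m'"
  proof (rule ext_eq)
    show "Fop I 4 T4 [l,m,l',m'] \<in> extensional (cube I)" by (simp add: Fop_def)
    show "m' \<in> extensional (cube I)" using f(4) by (rule FA_ext)
    fix u :: "'i \<Rightarrow> 'a" assume u: "u \<in> cube I"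
    show "Fop I 4 T4 [l,m,l',m'] u = m' u"
    proof (cases "l u = m u")
      case True
      then have "u \<in> eqset I l' m'" using sub u unfolding eqset_def by blast
      then show ?thesis using u True by (simp add: Fop4 eqset_def)
    next
      case False then show ?thesis using u by (simp add: Fop4)
    qed
  qed
  have e2: "Fop I 4 T4 [l,l,l',m'] = l'"
  proof (rule ext_eq)
    show "Fop I 4 T4 [l,l,l',m'] \<in> extensional (cube I)" by (simp add: Fop_def)
    show "l' \<in> extensional (cube I)" using f(3) by (rule FA_ext)
    fix u :: "'i \<Rightarrow> 'a" assume u: "u \<in> cube I"
    show "Fop I 4 T4 [l,l,l',m'] u = l' u" using u by (simp add: Fop4)
  qed
  have "\<phi> m' = opr L 4 T4 [\<phi> l, \<phi> m, \<phi> l', \<phi> m']" using hom4[OF H f] e1 by simp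
  also have "\<dots> = opr L 4 T4 [\<phi> l, \<phi> l, \<phi> l', \<phi> m']" using e by simp
  also have "\<dots> = \<phi> l'" using hom4[OF H f(1) f(1) f(3) f(4)] e2 by simp
  finally show ?thesis by simp
qed

lemma dep_apply: "dep I h ks \<Longrightarrow> u \<in> cube I \<Longrightarrow> v \<in> cube I \<Longrightarrow> (\<forall>i\<in>set ks. u i = v i) \<Longrightarrow> h u = h v"
  unfolding dep_def by blast

lemma eqset_BA: fixes I :: "'i set" and l m :: "('i \<Rightarrow> 'a) \<Rightarrow> 'a" and c0 c1 :: 'a
  assumes c: "c0 \<noteq> c1" and f: "l \<in> FA I" "m \<in> FA I"
  shows "eqset I l m \<in> BA I"
proof (cases "eqset I l m = {}")
  case True then show ?thesis unfolding BA_def by simp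
next
  case False
  then obtain u0 where u0: "u0 \<in> eqset I l m" by blast
  define \<chi> where "\<chi> = restrict (\<lambda>u. if l u = m u then c0 else c1) (cube I)"
  from f(1)[unfolded charFA] obtain kl where kl: "set kl \<subseteq> I" "dep I l kl" by (elim conjE exE)
  from f(2)[unfolded charFA] obtain km where km: "set km \<subseteq> I" "dep I m km" by (elim conjE exE)
  have "dep I \<chi> (kl @ km)" unfolding dep_def
  proof (intro ballI impI)
    fix u v :: "'i \<Rightarrow> 'a" assume uv: "u \<in> cube I" "v \<in> cube I" "\<forall>i\<in>set (kl @ km). u i = v i"
    have "l u = l v" using dep_apply[OF kl(2) uv(1,2)] uv(3) by simp
    moreover have "m u = m v" using dep_apply[OF km(2) uv(1,2)] uv(3) by simp
    ultimately show "\<chi> u = \<chi> v" using uv(1,2) unfolding \<chi>_def by simp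
  qed
  moreover have "\<chi> \<in> extensional (cube I)" unfolding \<chi>_def by simp
  moreover have "set (kl @ km) \<subseteq> I" using kl km by simp
  ultimately have "\<chi> \<in> FA I" unfolding charFA by blast
  then have P: "fib_part \<chi> (cube I) \<in> PF I" unfolding FA_def by simp
  have u0c: "u0 \<in> cube I" "l u0 = m u0" using u0 unfolding eqset_def by auto
  have "eqset I l m = \<chi> -` {\<chi> u0} \<inter> cube I"
    using u0c c unfolding eqset_def \<chi>_def by (auto split: if_splits)
  then have "eqset I l m \<in> fib_part \<chi> (cube I)" unfolding fib_part_def using u0c(1) by blast
  then show ?thesis using P unfolding BA_def by blast
qed

lemma BA_rep: fixes I :: "'i set" and c0 c1 :: 'a
  assumes c: "c0 \<noteq> c1" and S: "S \<in> BA I"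
  shows "\<exists>\<chi>\<in>FA I. eqset I \<chi> (Fcst I (c0 :: 'a)) = S"
proof (cases "S = {}")
  case True
  have "eqset I (Fcst I c1) (Fcst I c0) = {}" using c unfolding eqset_def Fcst_def by simp
  then have "eqset I (Fcst I c1) (Fcst I c0) = S" using True by simp
  then show ?thesis using Fcst_FA[of I c1] by (rule bexI)
next
  case False
  then obtain P where P: "P \<in> PF I" "S \<in> P" using S unfolding BA_def by blast
  obtain ks where ks: "is_partition P (cube I)" "set ks \<subseteq> I" "coarser P (coord_part I ks)"
    using P(1) unfolding PF_def by blast
  have Ssub: "S \<subseteq> cube I" using ks(1) P(2) unfolding is_partition_def by blast
  define \<chi> :: "('i \<Rightarrow> 'a) \<Rightarrow> 'a" where "\<chi> = restrict (\<lambda>u. if u \<in> S then c0 else c1) (cube I)"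
  have key: "u \<in> S \<Longrightarrow> v \<in> S" if uv: "u \<in> cube I" "v \<in> cube I" "\<forall>i\<in>set ks. u i = v i" for u v :: "'i \<Rightarrow> 'a"
  proof -
    assume uS: "u \<in> S"
    let ?B = "{w \<in> (cube I :: ('i \<Rightarrow> 'a) set). \<forall>i\<in>set ks. w i = u i}"
    have "?B \<in> coord_part I ks" using uv(1) unfolding coord_part_def by blast
    then obtain C where C: "C \<in> P" "?B \<subseteq> C" using ks(3) unfolding coarser_def by blast
    have "u \<in> C" "v \<in> C" using C(2) uv by auto
    then have "C = S" using ks(1) C(1) P(2) uS unfolding is_partition_def by blast
    then show "v \<in> S" using \<open>v \<in> C\<close> by simp
  qed
  have "dep I \<chi> ks" unfolding dep_def
  proof (intro ballI impI)
    fix u v :: "'i \<Rightarrow> 'a" assume uv: "u \<in> cube I" "v \<in> cube I" "\<forall>i\<in>set ks. u i = v i"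
    have "u \<in> S \<longleftrightarrow> v \<in> S" using key[OF uv] key[OF uv(2,1)] uv(3) by auto
    then show "\<chi> u = \<chi> v" using uv(1,2) unfolding \<chi>_def by simp
  qed
  moreover have "\<chi> \<in> extensional (cube I)" unfolding \<chi>_def by simp
  ultimately have "\<chi> \<in> FA I" unfolding charFA using ks(2) by blast
  moreover have "eqset I \<chi> (Fcst I c0) = S"
    using Ssub c unfolding eqset_def \<chi>_def Fcst_def by (auto split: if_splits)
  ultimately show ?thesis by (intro bexI[of _ \<chi>])
qed

lemma Fop4_same: fixes p :: "('i \<Rightarrow> 'a) \<Rightarrow> 'a"
  assumes "p \<in> FA I" shows "Fop I 4 T4 [l,l,p,q] = p"
proof (rule ext_eq)
  show "Fop I 4 T4 [l,l,p,q] \<in> extensional (cube I)" by (simp add: Fop_def)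
  show "p \<in> extensional (cube I)" using assms by (rule FA_ext)
  fix u :: "'i \<Rightarrow> 'a" assume u: "u \<in> cube I"
  show "Fop I 4 T4 [l,l,p,q] u = p u" using u by (simp add: Fop4)
qed

lemma Zf_iff: fixes I :: "'i set" and L :: "('a,'l) osig_alg" and c0 c1 :: 'a
  assumes V: "in_V_Omega L" and al: "\<alpha> \<in> I \<rightarrow> ocarrier L" and c: "c0 \<noteq> c1"
  shows "\<forall>l\<in>FA I. \<forall>m\<in>FA I. phi I L \<alpha> l = phi I L \<alpha> m \<longleftrightarrow> eqset I l m \<in> Zf I L \<alpha>"
proof -
  define \<phi> where "\<phi> = phi I L \<alpha>"
  have H: "is_hom_F I L \<phi>" unfolding \<phi>_def using V al by (rule phi_hom)
  define Z :: "('i \<Rightarrow> 'a) set set" where "Z = {S. \<exists>l\<in>FA I. \<exists>m\<in>FA I. \<phi> l = \<phi> m \<and> S = eqset I l m}"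
  have C0: "Fcst I c0 \<in> FA I" "Fcst I c1 \<in> FA I" by (rule Fcst_FA)+
  have iffZ: "\<forall>l\<in>FA I. \<forall>m\<in>FA I. \<phi> l = \<phi> m \<longleftrightarrow> eqset I l m \<in> Z"
  proof (intro ballI iffI)
    fix l m assume lm: "l \<in> FA I" "m \<in> FA I" and e: "\<phi> l = \<phi> m"
    show "eqset I l m \<in> Z" unfolding Z_def using lm e by auto
  next
    fix l m assume lm: "l \<in> FA I" "m \<in> FA I" and "eqset I l m \<in> Z"
    then obtain l' m' where lm': "l' \<in> FA I" "m' \<in> FA I" "\<phi> l' = \<phi> m'" "eqset I l m = eqset I l' m'"
      unfolding Z_def by auto
    have "eqset I l' m' \<subseteq> eqset I l m" using lm'(4) by (rule equalityD2)
    with lm'(1,2) lm lm'(3) show "\<phi> l = \<phi> m" by (rule Aprime[OF H, of l' m' l m])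
  qed
  have filt: "is_filter_on (BA I) (cube I) Z"
    unfolding is_filter_on_def
  proof (intro conjI ballI impI)
    show "Z \<subseteq> BA I"
    proof
      fix S assume "S \<in> Z"
      then obtain l m where lm: "l \<in> FA I" "m \<in> FA I" "S = eqset I l m" unfolding Z_def by auto
      show "S \<in> BA I" using eqset_BA[OF c lm(1,2)] lm(3) by simp
    qed
  next
    have "eqset I (Fcst I c0) (Fcst I c0) = cube I" by (auto simp: eqset_def)
    then show "cube I \<in> Z" unfolding Z_def using C0(1) by auto
  next
    fix S S' assume "S \<in> Z" "S' \<in> Z"
    then obtain l m l' m' where lm: "l \<in> FA I" "m \<in> FA I" "\<phi> l = \<phi> m" "S = eqset I l m"
      and lm': "l' \<in> FA I" "m' \<in> FA I" "\<phi> l' = \<phi> m'" "S' = eqset I l' m'"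
      unfolding Z_def by auto
    define p where "p = Fop I 4 T4 [l,m,l',Fcst I c0]"
    define q where "q = Fop I 4 T4 [l,m,m',Fcst I c1]"
    have pq: "p \<in> FA I" "q \<in> FA I" unfolding p_def q_def
      by (rule Fop_FA, use lm lm' C0 in simp)+
    have "eqset I p q = S \<inter> S'"
      using c unfolding lm(4) lm'(4) p_def q_def eqset_def Fop4 Fcst_def by (auto split: if_splits)
    moreover have "\<phi> p = \<phi> l'"
    proof -
      have "\<phi> p = opr L 4 T4 [\<phi> l, \<phi> m, \<phi> l', \<phi> (Fcst I c0)]" unfolding p_def using hom4[OF H lm(1,2) lm'(1) C0(1)] .
      also have "\<dots> = opr L 4 T4 [\<phi> l, \<phi> l, \<phi> l', \<phi> (Fcst I c0)]" using lm(3) by simp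
      also have "\<dots> = \<phi> (Fop I 4 T4 [l,l,l',Fcst I c0])" using hom4[OF H lm(1,1) lm'(1) C0(1)] by simp
      also have "\<dots> = \<phi> l'" using Fop4_same[OF lm'(1)] by simp
      finally show ?thesis .
    qed
    moreover have "\<phi> q = \<phi> m'"
    proof -
      have "\<phi> q = opr L 4 T4 [\<phi> l, \<phi> m, \<phi> m', \<phi> (Fcst I c1)]" unfolding q_def using hom4[OF H lm(1,2) lm'(2) C0(2)] .
      also have "\<dots> = opr L 4 T4 [\<phi> l, \<phi> l, \<phi> m', \<phi> (Fcst I c1)]" using lm(3) by simp
      also have "\<dots> = \<phi> (Fop I 4 T4 [l,l,m',Fcst I c1])" using hom4[OF H lm(1,1) lm'(2) C0(2)] by simp
      also have "\<dots> = \<phi> m'" using Fop4_same[OF lm'(2)] by simp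
      finally show ?thesis .
    qed
    ultimately have "eqset I p q = S \<inter> S'" "\<phi> p = \<phi> q" using lm'(3) by simp_all
    then show "S \<inter> S' \<in> Z" unfolding Z_def using pq
      by (intro CollectI bexI[of _ p] bexI[of _ q] conjI) simp_all
  next
    fix S S' assume "S \<in> Z" and S': "S' \<in> BA I" and sub: "S \<subseteq> S'"
    then obtain l m where lm: "l \<in> FA I" "m \<in> FA I" "\<phi> l = \<phi> m" "S = eqset I l m"
      unfolding Z_def by auto
    obtain \<chi> where ch: "\<chi> \<in> FA I" "eqset I \<chi> (Fcst I c0) = S'" using BA_rep[OF c S'] by blast
    have "eqset I l m \<subseteq> eqset I \<chi> (Fcst I c0)" using sub lm(4) ch(2) by simp
    with lm(1,2) ch(1) C0(1) lm(3) have "\<phi> \<chi> = \<phi> (Fcst I c0)" by (rule Aprime[OF H, of l m \<chi> "Fcst I c0"])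
    then show "S' \<in> Z" unfolding Z_def using ch(1) C0(1) ch(2)
      by (intro CollectI bexI[of _ \<chi>] bexI[of _ "Fcst I c0"] conjI) simp_all
  qed
  have uniq: "Z' = Z" if Z': "is_filter_on (BA I) (cube I) Z' \<and> (\<forall>l\<in>FA I. \<forall>m\<in>FA I. \<phi> l = \<phi> m \<longleftrightarrow> eqset I l m \<in> Z')" for Z'
  proof -
    have Zs: "Z' \<subseteq> BA I" using Z' unfolding is_filter_on_def by (elim conjE)
    have Zi: "\<forall>l\<in>FA I. \<forall>m\<in>FA I. \<phi> l = \<phi> m \<longleftrightarrow> eqset I l m \<in> Z'" using Z' by (elim conjE)
    show "Z' = Z"
    proof
      show "Z' \<subseteq> Z"
      proof
        fix S assume S: "S \<in> Z'"
        then have "S \<in> BA I" using Zs by (rule rev_subsetD)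
        then obtain \<chi> where ch: "\<chi> \<in> FA I" "eqset I \<chi> (Fcst I c0) = S" using BA_rep[OF c] by blast
        have "\<phi> \<chi> = \<phi> (Fcst I c0)" using Zi[rule_format, OF ch(1) C0(1)] ch(2) S by simp
        then show "S \<in> Z" using iffZ[rule_format, OF ch(1) C0(1)] ch(2) by simp
      qed
    next
      show "Z \<subseteq> Z'"
      proof
        fix S assume "S \<in> Z"
        then obtain l m where lm: "l \<in> FA I" "m \<in> FA I" "\<phi> l = \<phi> m" "S = eqset I l m"
          unfolding Z_def by auto
        then show "S \<in> Z'" using Zi[rule_format, OF lm(1,2)] by simp
      qed
    qed
  qed
  have "Zf I L \<alpha> = Z" unfolding Zf_def \<phi>_def[symmetric]
  proof (rule the_equality)
    show "is_filter_on (BA I) (cube I) Z \<and> (\<forall>l\<in>FA I. \<forall>m\<in>FA I. \<phi> l = \<phi> m \<longleftrightarrow> eqset I l m \<in> Z)"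
      using filt iffZ by (rule conjI)
  next
    fix Z' assume "is_filter_on (BA I) (cube I) Z' \<and> (\<forall>l\<in>FA I. \<forall>m\<in>FA I. \<phi> l = \<phi> m \<longleftrightarrow> eqset I l m \<in> Z')"
    then show "Z' = Z" by (rule uniq)
  qed
  then show ?thesis using iffZ unfolding \<phi>_def by simp
qed

lemma coord_part_PF: fixes J :: "'j set" assumes "j \<in> J" shows "(coord_part J [j] :: ('j \<Rightarrow> 'a) set set) \<in> PF J"
proof -
  have "coarser (coord_part J [j] :: ('j \<Rightarrow> 'a) set set) (coord_part J [j])" unfolding coarser_def by blast
  moreover have "set [j] \<subseteq> J" using assms by simp
  ultimately show ?thesis unfolding PF_def using coord_part_partition by blast
qed

lemma g_FA: fixes f :: "('i \<Rightarrow> 'a) \<Rightarrow> ('j \<Rightarrow> 'a)" and I :: "'i set" and J :: "'j set"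
  assumes uc: "unif_cont I J f" and j: "j \<in> J"
  shows "restrict (\<lambda>u. f u j) (cube I) \<in> FA I"
proof -
  have "preim_part f (cube I) (coord_part J [j]) \<in> PF I" using uc coord_part_PF[OF j] unfolding unif_cont_def by blast
  then obtain ks where ks: "set ks \<subseteq> I" "coarser (preim_part f (cube I) (coord_part J [j])) (coord_part I ks)"
    unfolding PF_def by blast
  have "dep I (restrict (\<lambda>u. f u j) (cube I)) ks" unfolding dep_def
  proof (intro ballI impI)
    fix u v :: "'i \<Rightarrow> 'a" assume uv: "u \<in> cube I" "v \<in> cube I" "\<forall>i\<in>set ks. u i = v i"
    let ?B = "{w \<in> (cube I :: ('i \<Rightarrow> 'a) set). \<forall>i\<in>set ks. w i = u i}"
    have "?B \<in> coord_part I ks" using uv(1) unfolding coord_part_def by blast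
    then obtain C where C: "C \<in> preim_part f (cube I) (coord_part J [j])" "?B \<subseteq> C"
      using ks(2) unfolding coarser_def by blast
    then obtain R where R: "R \<in> coord_part J [j]" "C = f -` R \<inter> cube I" unfolding preim_part_def by blast
    then obtain x where x: "R = {w \<in> cube J. \<forall>i\<in>set [j]. w i = x i}" unfolding coord_part_def by blast
    have "u \<in> C" "v \<in> C" using C(2) uv by auto
    then have "f u j = x j" "f v j = x j" using R(2) x by auto
    then show "restrict (\<lambda>u. f u j) (cube I) u = restrict (\<lambda>u. f u j) (cube I) v" using uv(1,2) by simp
  qed
  moreover have "restrict (\<lambda>u. f u j) (cube I) \<in> extensional (cube I)" by simp
  ultimately show ?thesis unfolding charFA using ks(1) by blast
qed

lemma ovl_phi: fixes I :: "'i set" and L :: "('a,'l) osig_alg" and h :: "('i \<Rightarrow> 'a) \<Rightarrow> 'a"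
  assumes V: "in_V_Omega L" and al: "\<alpha> \<in> I \<rightarrow> ocarrier L" and h: "h \<in> FA I"
  shows "ovl I L h \<alpha> = phi I L \<alpha> h"
proof -
  let ?Q = "\<lambda>y. (\<exists>c. h = Fcst I c \<and> y = cst L c) \<or>
     (\<exists>n r ks. op_sym n r \<and> length ks = n \<and> set ks \<subseteq> I \<and>
        h = Fop I n r (map (proj I) ks) \<and> y = opr L n r (map \<alpha> ks))"
  have all: "y = phi I L \<alpha> h" if "?Q y" for y
    using that
  proof
    assume "\<exists>c. h = Fcst I c \<and> y = cst L c"
    then obtain c where c: "h = Fcst I c" "y = cst L c" by blast
    have "rep I (MC c :: ('a,'i) mt) h" unfolding rep_def c(1) by simp
    from phi_rep[OF V al this] c(2) show ?thesis by simp
  next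
    assume "\<exists>n r ks. op_sym n r \<and> length ks = n \<and> set ks \<subseteq> I \<and>
        h = Fop I n r (map (proj I) ks) \<and> y = opr L n r (map \<alpha> ks)"
    then obtain n r ks where nr: "op_sym n r" "length ks = n" "set ks \<subseteq> I"
        "h = Fop I n r (map (proj I) ks)" "y = opr L n r (map \<alpha> ks)" by blast
    have "map (Fsub I (proj I)) (map MV ks) = map (proj I) ks" by simp
    then have "Fsub I (proj I) (MO n r (map MV ks)) = h" unfolding nr(4) Fsub.simps by (rule arg_cong)
    moreover have "mwf (MO n r (map MV ks))" using nr(1,2) by simp
    moreover have "set (mvl (MO n r (map MV ks))) = set ks" by auto
    ultimately have "rep I (MO n r (map MV ks)) h" unfolding rep_def using nr(3) by simp
    from phi_rep[OF V al this] nr(5) show ?thesis by (simp add: comp_def)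
  qed
  have ex: "\<exists>y. ?Q y"
    using FA_rep[OF h]
  proof
    assume "\<exists>c. h = Fcst I c"
    then obtain c where "h = Fcst I c" by blast
    then show ?thesis by blast
  next
    assume "\<exists>n r ks. op_sym n r \<and> length ks = n \<and> set ks \<subseteq> I \<and> h = Fop I n r (map (proj I) ks)"
    then obtain n r ks where nr: "op_sym n r" "length ks = n" "set ks \<subseteq> I" "h = Fop I n r (map (proj I) ks)" by blast
    then have "?Q (opr L n r (map \<alpha> ks))" by blast
    then show ?thesis by (rule exI)
  qed
  have "?Q (SOME y. ?Q y)" using ex by (rule someI_ex)
  then have "(SOME y. ?Q y) = phi I L \<alpha> h" by (rule all)
  then show ?thesis unfolding ovl_def .
qed

lemma key_K: fixes L :: "('a, 'l) osig_alg" and I :: "'i set" and J :: "'j set"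
    and f :: "('i \<Rightarrow> 'a) \<Rightarrow> ('j \<Rightarrow> 'a)" and \<alpha> :: "'i \<Rightarrow> 'l" and \<beta> :: "'j \<Rightarrow> 'l"
  assumes V: "in_V_Omega L" and uc: "unif_cont I J f"
    and al: "\<alpha> \<in> I \<rightarrow> ocarrier L" and be: "\<beta> \<in> J \<rightarrow> ocarrier L"
    and bf: "\<forall>j\<in>J. \<beta> j = ovlF I J L f \<alpha> j"
    and m: "m \<in> FA J"
  shows "restrict (m \<circ> f) (cube I) \<in> FA I \<and> phi I L \<alpha> (restrict (m \<circ> f) (cube I)) = phi J L \<beta> m"
proof -
  define g where "g = (\<lambda>j. restrict (\<lambda>u. f u j) (cube I))"
  have gFA: "g j \<in> FA I" if "j \<in> J" for j unfolding g_def using uc that by (rule g_FA)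
  have gb: "phi I L \<alpha> (g j) = \<beta> j" if j: "j \<in> J" for j
  proof -
    have "\<beta> j = ovl I L (g j) \<alpha>" using bf j unfolding ovlF_def g_def by simp
    also have "\<dots> = phi I L \<alpha> (g j)" using V al gFA[OF j] by (rule ovl_phi)
    finally show ?thesis by simp
  qed
  obtain t :: "('a,'j) mt" where r: "rep J t m" using rep_ex[OF m] by blast
  have r1: "mwf t" "set (mvl t) \<subseteq> J" "Fsub J (proj J) t = m" using r unfolding rep_def by auto
  have gv: "\<forall>j\<in>set (mvl t). g j \<in> FA I" using r1(2) gFA by auto
  have FS: "Fsub I g t \<in> FA I" using gv by (rule Fsub_FA)
  have fcube: "f u \<in> cube J" if "u \<in> cube I" for u using uc that unfolding unif_cont_def by auto
  have eq: "restrict (m \<circ> f) (cube I) = Fsub I g t"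
  proof (rule ext_eq)
    show "restrict (m \<circ> f) (cube I) \<in> extensional (cube I)" by simp
    show "Fsub I g t \<in> extensional (cube I)" using FS by (rule FA_ext)
    fix u :: "'i \<Rightarrow> 'a" assume u: "u \<in> cube I"
    have "restrict (m \<circ> f) (cube I) u = m (f u)" using u by simp
    also have "\<dots> = Fsub J (proj J) t (f u)" using r1(3) by simp
    also have "\<dots> = leval Omega (f u) t" using Fsub_proj_pt[OF fcube[OF u] r1(2)] .
    also have "\<dots> = leval Omega (\<lambda>j. g j u) t" by (rule leval_cong) (simp add: g_def u)
    also have "\<dots> = Fsub I g t u" using Fsub_pt[OF u, of g t] by simp
    finally show "restrict (m \<circ> f) (cube I) u = Fsub I g t u" .
  qed
  have H: "is_hom_F I L (phi I L \<alpha>)" using V al by (rule phi_hom)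
  have "phi I L \<alpha> (Fsub I g t) = leval L (phi I L \<alpha> \<circ> g) t" using Fsub_hom[OF H r1(1) gv] .
  also have "\<dots> = leval L \<beta> t" by (rule leval_cong) (use r1(2) gb in auto)
  also have "\<dots> = phi J L \<beta> m" using phi_rep[OF V be r] by simp
  finally show ?thesis using eq FS by simp
qed

lemma phi_gen_sub: fixes L :: "('a, 'l) osig_alg" and J :: "'j set" and \<beta> :: "'j \<Rightarrow> 'l"
  assumes V: "in_V_Omega L" and be: "\<beta> \<in> J \<rightarrow> ocarrier L" and m: "m \<in> FA J"
  shows "phi J L \<beta> m \<in> gen_sub L (\<beta> ` J)"
proof -
  obtain t :: "('a,'j) mt" where r: "rep J t m" using rep_ex[OF m] by blast
  have r1: "mwf t" "set (mvl t) \<subseteq> J" using r unfolding rep_def by auto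
  have "leval L \<beta> t \<in> gen_sub L (\<beta> ` J)" unfolding gen_sub_def
  proof (rule InterI)
    fix S assume "S \<in> {S. S \<subseteq> ocarrier L \<and> \<beta> ` J \<subseteq> S \<and> (\<forall>a. cst L a \<in> S) \<and>
      (\<forall>n h xs. op_sym n h \<and> length xs = n \<and> set xs \<subseteq> S \<longrightarrow> opr L n h xs \<in> S)}"
    then have S: "\<beta> ` J \<subseteq> S" "\<forall>a. cst L a \<in> S"
        "\<forall>n h xs. op_sym n h \<and> length xs = n \<and> set xs \<subseteq> S \<longrightarrow> opr L n h xs \<in> S" by auto
    have "\<forall>i\<in>set (mvl t). \<beta> i \<in> S" using S(1) r1(2) by auto
    then show "leval L \<beta> t \<in> S" using leval_sub[OF S(2,3) r1(1)] by simp
  qed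
  then show ?thesis using phi_rep[OF V be r] by simp
qed

lemma Zrel_eq: fixes L :: "('a, 'l) osig_alg" and I :: "'i set" and c0 c1 :: 'a
  assumes V: "in_V_Omega L" and al: "\<alpha> \<in> I \<rightarrow> ocarrier L" and c: "c0 \<noteq> c1"
  shows "Zrel I L \<alpha> = {(l, m). l \<in> FA I \<and> m \<in> FA I \<and> phi I L \<alpha> l = phi I L \<alpha> m}"
  using Zf_iff[OF V al c] unfolding Zrel_def by auto

lemma two_elems: assumes "infinite (UNIV :: 'a set)" obtains c0 c1 :: 'a where "c0 \<noteq> c1"
proof -
  have "\<exists>c0 c1 :: 'a. c0 \<noteq> c1"
  proof (rule ccontr)
    assume "\<not> (\<exists>c0 c1 :: 'a. c0 \<noteq> c1)"
    then have "UNIV = {undefined :: 'a}" by auto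
    then show False using assms by (metis finite.emptyI finite_insert)
  qed
  then show ?thesis using that by blast
qed

theorem mainTheorem8:
  fixes L :: "('a, 'l) osig_alg" and I :: "'i set" and J :: "'j set"
    and f :: "('i \<Rightarrow> 'a) \<Rightarrow> ('j \<Rightarrow> 'a)" and \<alpha> :: "'i \<Rightarrow> 'l" and \<beta> :: "'j \<Rightarrow> 'l"
  assumes "infinite (UNIV :: 'a set)"
    and "in_V_Omega L"
    and "unif_cont I J f"
    and "\<alpha> \<in> I \<rightarrow> ocarrier L"
    and "\<beta> \<in> J \<rightarrow> ocarrier L"
    and "\<forall>j\<in>J. \<beta> j = ovlF I J L f \<alpha> j"
  shows "\<forall>X \<in> Fquot J L \<beta>.
           incl L (\<beta> ` J) (iota J L \<beta> X) = iota I L \<alpha> (fquot_map I J L \<alpha> \<beta> f X)"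
proof
  note V = assms(2) and uc = assms(3) and al = assms(4) and be = assms(5) and bf = assms(6)
  obtain c0 c1 :: 'a where c: "c0 \<noteq> c1" using assms(1) by (rule two_elems)
  fix X assume "X \<in> Fquot J L \<beta>"
  then obtain l where l: "l \<in> FA J" "X = Zrel J L \<beta> `` {l}" unfolding Fquot_def by (rule quotientE)
  define \<phi>a where "\<phi>a = phi I L \<alpha>"
  define \<phi>b where "\<phi>b = phi J L \<beta>"
  have X: "X = {m. m \<in> FA J \<and> \<phi>b l = \<phi>b m}" using l Zrel_eq[OF V be c] unfolding \<phi>b_def by auto
  have lX: "l \<in> X" using X l(1) by simp
  have "\<phi>b ` X = {\<phi>b l}" using X lX by auto
  then have iotaX: "iota J L \<beta> X = \<phi>b l" unfolding iota_def \<phi>b_def by simp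
  have "\<phi>b l \<in> gen_sub L (\<beta> ` J)" unfolding \<phi>b_def using V be l(1) by (rule phi_gen_sub)
  then have LHS: "incl L (\<beta> ` J) (iota J L \<beta> X) = \<phi>b l" unfolding iotaX incl_def by simp
  define CL where "CL = {g. g \<in> FA I \<and> \<phi>b l = \<phi>a g}"
  have cls_eq: "cls I L \<alpha> (restrict (m \<circ> f) (cube I)) = CL" if m: "m \<in> X" for m
  proof -
    have mm: "m \<in> FA J" "\<phi>b l = \<phi>b m" using m X by auto
    have K: "restrict (m \<circ> f) (cube I) \<in> FA I" "\<phi>a (restrict (m \<circ> f) (cube I)) = \<phi>b m"
      using key_K[OF V uc al be bf mm(1)] unfolding \<phi>a_def \<phi>b_def by auto
    show ?thesis unfolding cls_def Zrel_eq[OF V al c] CL_def using K mm(2) unfolding \<phi>a_def by auto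
  qed
  have "(\<lambda>m. cls I L \<alpha> (restrict (m \<circ> f) (cube I))) ` X = {CL}" using cls_eq lX by auto
  then have fq: "fquot_map I J L \<alpha> \<beta> f X = CL" unfolding fquot_map_def by simp
  have K: "restrict (l \<circ> f) (cube I) \<in> FA I" "\<phi>a (restrict (l \<circ> f) (cube I)) = \<phi>b l"
    using key_K[OF V uc al be bf l(1)] unfolding \<phi>a_def \<phi>b_def by auto
  then have "restrict (l \<circ> f) (cube I) \<in> CL" unfolding CL_def by simp
  then have "\<phi>a ` CL = {\<phi>b l}" unfolding CL_def by auto
  then have "iota I L \<alpha> CL = \<phi>b l" unfolding iota_def \<phi>a_def by simp
  then show "incl L (\<beta> ` J) (iota J L \<beta> X) = iota I L \<alpha> (fquot_map I J L \<alpha> \<beta> f X)"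
    using LHS fq by simp
qed


end
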